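(* Let $x\ge 0$ and $y$ be integers with $M(x,y)\neq\emptyset$, and let $G_0$ be a minimal graph in $M(x,y)$. If $G_0$ is nonseparable, then (a) $|V(G_0)|=4f(G_0)-2x-1$; (b) $4f(G_0)-2x-1<R(f(G_0)-x+1,3)$.
   Context: All graphs are finite, simple and undirected; the empty graph (with no vertices) is allowed, with $\chi=\mathrm{cl}=0$. $\mathrm{cl}(G)$ is the clique number, $\chi(G)$ the chromatic number, and $f(G)=\chi(G)-\mathrm{cl}(G)$. For integers $x,y$, $M(x,y)=\{G: |V(G)|<\chi(G)+2f(G)-x \text{ and } f(G)\le y\}$. A graph $G_0$ in a nonempty set $\mathcal M$ of graphs is minimal in $\mathcal M$ if $|V(G_0)|=\min\{|V(G)|:G\in\mathcal M\}$. For vertex-disjoint graphs $G_1,G_2$, $G_1+G_2$ is the graph on $V(G_1)\cup V(G_2)$ whose edges are those of $G_1$, those of $G_2$, and all pairs $\{u,v\}$ with $u\in V(G_1)$, $v\in V(G_2)$ (the join). $G$ is separable if $G=G_1+G_2$ with $V(G_1)\neq\emptyset$ and $V(G_2)\neq\emptyset$; otherwise nonseparable. $R(p,3)$ is the least $n$ such that every graph on at least $n$ vertices has a $p$-clique or an independent set of size $3$. *)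

theory Defs
  imports Main
begin

text \<open>Finite simple undirected graphs, with vertices drawn from nat
 (every finite graph is isomorphic to one of these).\<close>

type_synonym graph = "nat set \<times> nat set set"

definition V :: "graph \<Rightarrow> nat set" where "V G = fst G"
definition E :: "graph \<Rightarrow> nat set set" where "E G = snd G"

definition is_graph :: "graph \<Rightarrow> bool" where
  "is_graph G \<longleftrightarrow> finite (V G) \<and>
     (\<forall>e\<in>E G. \<exists>u v. e = {u, v} \<and> u \<noteq> v \<and> u \<in> V G \<and> v \<in> V G)"

definition is_clique :: "graph \<Rightarrow> nat set \<Rightarrow> bool" where
  "is_clique G K \<longleftrightarrow> K \<subseteq> V G \<and> (\<forall>u\<in>K. \<forall>v\<in>K. u \<noteq> v \<longrightarrow> {u, v} \<in> E G)"

definition is_indep :: "graph \<Rightarrow> nat set \<Rightarrow> bool" where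
  "is_indep G I \<longleftrightarrow> I \<subseteq> V G \<and> (\<forall>u\<in>I. \<forall>v\<in>I. {u, v} \<notin> E G)"

definition cl :: "graph \<Rightarrow> nat" where
  "cl G = Max {card K | K. is_clique G K}"

definition chi :: "graph \<Rightarrow> nat" where
  "chi G = (LEAST k. \<exists>c :: nat \<Rightarrow> nat. c ` V G \<subseteq> {..<k} \<and>
              (\<forall>u\<in>V G. \<forall>v\<in>V G. {u, v} \<in> E G \<longrightarrow> c u \<noteq> c v))"

definition f :: "graph \<Rightarrow> int" where
  "f G = int (chi G) - int (cl G)"

definition M :: "int \<Rightarrow> int \<Rightarrow> graph set" where
  "M x y = {G. is_graph G \<and> int (card (V G)) < int (chi G) + 2 * f G - x \<and> f G \<le> y}"

definition minimal_in :: "graph set \<Rightarrow> graph \<Rightarrow> bool" where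
  "minimal_in \<M> G0 \<longleftrightarrow> G0 \<in> \<M> \<and> card (V G0) = (LEAST n. \<exists>G\<in>\<M>. card (V G) = n)"

definition join :: "graph \<Rightarrow> graph \<Rightarrow> graph" where
  "join G1 G2 = (V G1 \<union> V G2,
                 E G1 \<union> E G2 \<union> {{u, v} | u v. u \<in> V G1 \<and> v \<in> V G2})"

definition separable :: "graph \<Rightarrow> bool" where
  "separable G \<longleftrightarrow> (\<exists>G1 G2. is_graph G1 \<and> is_graph G2 \<and> V G1 \<inter> V G2 = {} \<and>
      V G1 \<noteq> {} \<and> V G2 \<noteq> {} \<and> G = join G1 G2)"

definition ramsey3 :: "int \<Rightarrow> nat" where
  "ramsey3 p = (LEAST n. \<forall>G. is_graph G \<and> card (V G) \<ge> n \<longrightarrow>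
      (\<exists>K. is_clique G K \<and> int (card K) = p) \<or> (\<exists>I. is_indep G I \<and> card I = 3))"

end

theory Submission
  imports Defs "HOL-Library.Ramsey"
begin

definition sub :: "graph \<Rightarrow> nat set \<Rightarrow> graph" where
  "sub G W = (W, {e \<in> E G. e \<subseteq> W})"

lemma V_sub[simp]: "V (sub G W) = W" by (simp add: sub_def V_def)
lemma E_sub[simp]: "E (sub G W) = {e \<in> E G. e \<subseteq> W}" by (simp add: sub_def E_def)

lemma is_graph_sub: assumes g: "is_graph G" and W: "W \<subseteq> V G" shows "is_graph (sub G W)"
  unfolding is_graph_def
proof (intro conjI ballI)
  show "finite (V (sub G W))" using g W unfolding is_graph_def by (auto intro: finite_subset)
next
  fix e assume e: "e \<in> E (sub G W)"
  then obtain u v where "e = {u,v}" "u \<noteq> v" using g unfolding is_graph_def by auto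
  then show "\<exists>u v. e = {u, v} \<and> u \<noteq> v \<and> u \<in> V (sub G W) \<and> v \<in> V (sub G W)" using e by auto
qed

lemma sub_self: "is_graph G \<Longrightarrow> sub G (V G) = G"
  apply (cases G)
  apply (auto simp: sub_def V_def E_def is_graph_def)
  done

lemma noloop: "is_graph G \<Longrightarrow> {u} \<notin> E G"
  unfolding is_graph_def by (metis doubleton_eq_iff insert_absorb2)

definition ind :: "graph \<Rightarrow> nat set \<Rightarrow> bool" where
  "ind G S \<longleftrightarrow> (\<forall>u\<in>S. \<forall>v\<in>S. u \<noteq> v \<longrightarrow> {u,v} \<notin> E G)"
definition clq :: "graph \<Rightarrow> nat set \<Rightarrow> bool" where
  "clq G S \<longleftrightarrow> (\<forall>u\<in>S. \<forall>v\<in>S. u \<noteq> v \<longrightarrow> {u,v} \<in> E G)"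
definition ipart :: "graph \<Rightarrow> nat set \<Rightarrow> nat set set \<Rightarrow> bool" where
  "ipart G W P \<longleftrightarrow> \<Union>P = W \<and> (\<forall>B\<in>P. B \<noteq> {} \<and> ind G B) \<and>
     (\<forall>B\<in>P. \<forall>B'\<in>P. B \<noteq> B' \<longrightarrow> B \<inter> B' = {})"

lemma ipart_finite: "finite W \<Longrightarrow> ipart G W P \<Longrightarrow> finite P"
  unfolding ipart_def by (metis Pow_UNIV UNIV_I Union_Pow_eq finite_Pow_iff finite_UnionD)

lemma part_col:
  assumes g: "is_graph G" and fW: "finite W" and p: "ipart G W P"
  shows "\<exists>c::nat\<Rightarrow>nat. c ` W \<subseteq> {..<card P} \<and> (\<forall>u\<in>W. \<forall>v\<in>W. {u,v} \<in> E G \<longrightarrow> c u \<noteq> c v)"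
proof -
  have fP: "finite P" using ipart_finite[OF fW p] .
  obtain h where h: "bij_betw h P {0..<card P}" using ex_bij_betw_finite_nat[OF fP] by blast
  have un: "\<Union>P = W" and disj: "\<And>B B'. B \<in> P \<Longrightarrow> B' \<in> P \<Longrightarrow> B \<noteq> B' \<Longrightarrow> B \<inter> B' = {}"
    and indB: "\<And>B. B \<in> P \<Longrightarrow> ind G B"
    using p unfolding ipart_def by auto
  define blk where "blk v = (THE B. B \<in> P \<and> v \<in> B)" for v
  have blk: "blk v \<in> P \<and> v \<in> blk v" if "v \<in> W" for v
  proof -
    obtain B where B: "B \<in> P" "v \<in> B" using un \<open>v \<in> W\<close> by blast
    have uq: "B' = B" if "B' \<in> P \<and> v \<in> B'" for B'
    proof (rule ccontr)
      assume "B' \<noteq> B"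
      then have "B' \<inter> B = {}" using disj that B(1) by blast
      then show False using that B(2) by blast
    qed
    have "blk v = B" unfolding blk_def
      by (rule the_equality) (use B uq in blast)+
    then show ?thesis using B by simp
  qed
  define c where "c v = h (blk v)" for v
  have hP: "h B < card P" if "B \<in> P" for B
    using bij_betwE[OF h] that by auto
  have hinj: "inj_on h P" using bij_betw_imp_inj_on[OF h] .
  show ?thesis
  proof (intro exI conjI ballI impI)
    show "c ` W \<subseteq> {..<card P}"
    proof
      fix i assume "i \<in> c ` W"
      then obtain v where "v \<in> W" "i = c v" by blast
      then show "i \<in> {..<card P}" using hP blk unfolding c_def by simp
    qed
  next
    fix u v assume uv: "u \<in> W" "v \<in> W" "{u,v} \<in> E G"
    have "u \<noteq> v" using uv noloop[OF g] by auto
    show "c u \<noteq> c v"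
    proof
      assume "c u = c v"
      then have "h (blk u) = h (blk v)" unfolding c_def .
      then have "blk u = blk v" using inj_onD[OF hinj] blk uv by blast
      then have "u \<in> blk u" "v \<in> blk u" "blk u \<in> P" using blk uv by auto
      then have "{u,v} \<notin> E G" using indB \<open>u \<noteq> v\<close> unfolding ind_def by blast
      then show False using uv by blast
    qed
  qed
qed

lemma chi_le_part:
  assumes g: "is_graph G" and W: "W \<subseteq> V G" and p: "ipart G W P"
  shows "chi (sub G W) \<le> card P"
proof -
  have fW: "finite W" using g W unfolding is_graph_def by (auto intro: finite_subset)
  obtain c :: "nat\<Rightarrow>nat" where c: "c ` W \<subseteq> {..<card P}" "\<forall>u\<in>W. \<forall>v\<in>W. {u,v} \<in> E G \<longrightarrow> c u \<noteq> c v"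
    using part_col[OF g fW p] by blast
  have "\<exists>c :: nat \<Rightarrow> nat. c ` V (sub G W) \<subseteq> {..<card P} \<and>
              (\<forall>u\<in>V (sub G W). \<forall>v\<in>V (sub G W). {u, v} \<in> E (sub G W) \<longrightarrow> c u \<noteq> c v)"
    using c by auto
  then show ?thesis unfolding chi_def by (rule Least_le)
qed

lemma ipart_single: "ipart G W ((\<lambda>v. {v}) ` W)"
  unfolding ipart_def ind_def by auto

lemma chi_le_card: "is_graph G \<Longrightarrow> W \<subseteq> V G \<Longrightarrow> chi (sub G W) \<le> card W"
  using chi_le_part[OF _ _ ipart_single] card_image[of "\<lambda>v. {v}" W]
  by (metis inj_singleton inj_on_subset subset_UNIV)

lemma chi_part:
  assumes g: "is_graph G" and W: "W \<subseteq> V G"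
  shows "\<exists>P. ipart G W P \<and> card P = chi (sub G W)"
proof -
  have fW: "finite W" using g W unfolding is_graph_def by (auto intro: finite_subset)
  define k where "k = chi (sub G W)"
  have ex: "\<exists>k. \<exists>c :: nat \<Rightarrow> nat. c ` V (sub G W) \<subseteq> {..<k} \<and>
              (\<forall>u\<in>V (sub G W). \<forall>v\<in>V (sub G W). {u, v} \<in> E (sub G W) \<longrightarrow> c u \<noteq> c v)"
    using part_col[OF g fW ipart_single] by auto
  have "\<exists>c :: nat \<Rightarrow> nat. c ` V (sub G W) \<subseteq> {..<k} \<and>
              (\<forall>u\<in>V (sub G W). \<forall>v\<in>V (sub G W). {u, v} \<in> E (sub G W) \<longrightarrow> c u \<noteq> c v)"
    unfolding k_def chi_def by (rule LeastI_ex[OF ex])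
  then obtain c :: "nat\<Rightarrow>nat" where c: "c ` W \<subseteq> {..<k}"
     "\<forall>u\<in>W. \<forall>v\<in>W. {u, v} \<in> E (sub G W) \<longrightarrow> c u \<noteq> c v"
    by auto
  define P where "P = (\<lambda>i. {v\<in>W. c v = i}) ` {..<k} - {{}}"
  have p: "ipart G W P"
    unfolding ipart_def ind_def
  proof (intro conjI ballI impI)
    show "\<Union>P = W"
    proof
      show "\<Union>P \<subseteq> W" unfolding P_def by blast
      show "W \<subseteq> \<Union>P"
      proof
        fix v assume v: "v \<in> W"
        then have "c v < k" using c(1) by blast
        then have "{w\<in>W. c w = c v} \<in> P" unfolding P_def using v by blast
        then show "v \<in> \<Union>P" using v by blast
      qed
    qed
  next
    fix B assume "B \<in> P"
    then show "B \<noteq> {}" unfolding P_def by blast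
  next
    fix B u v assume B: "B \<in> P" and uv: "u \<in> B" "v \<in> B" "u \<noteq> v"
    then obtain i where Bi: "B = {v\<in>W. c v = i}" unfolding P_def by blast
    then have "u \<in> W" "v \<in> W" "c u = c v" using uv by auto
    then show "{u, v} \<notin> E G" using c(2) by auto
  next
    fix B B' assume B: "B \<in> P" "B' \<in> P" "B \<noteq> B'"
    then obtain i j where "B = {v\<in>W. c v = i}" "B' = {v\<in>W. c v = j}" unfolding P_def by blast
    then show "B \<inter> B' = {}" using B(3) by (cases "i = j") auto
  qed
  have "card P \<le> k"
    unfolding P_def by (metis (no_types, lifting) card_Diff1_le card_image_le card_lessThan finite_imageI finite_lessThan order_trans)
  moreover have "k \<le> card P" using chi_le_part[OF g W p] k_def by simp
  ultimately show ?thesis using p k_def by (intro exI[of _ P]) auto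
qed



lemma finite_sub_V: "is_graph G \<Longrightarrow> W \<subseteq> V G \<Longrightarrow> finite W"
  unfolding is_graph_def by (auto intro: finite_subset)

lemma chi_mono:
  assumes g: "is_graph G" and W: "W \<subseteq> W'" and W': "W' \<subseteq> V G"
  shows "chi (sub G W) \<le> chi (sub G W')"
proof -
  obtain P' where P': "ipart G W' P'" "card P' = chi (sub G W')" using chi_part[OF g W'] by blast
  have fP': "finite P'" using ipart_finite[OF finite_sub_V[OF g W'] P'(1)] .
  define P where "P = (\<lambda>B. B \<inter> W) ` P' - {{}}"
  have p: "ipart G W P"
    unfolding ipart_def
  proof (intro conjI ballI impI)
    show "\<Union>P = W"
    proof
      show "\<Union>P \<subseteq> W" unfolding P_def by blast
      show "W \<subseteq> \<Union>P"
      proof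
        fix v assume v: "v \<in> W"
        then obtain C where C: "C \<in> P'" "v \<in> C" using P'(1) W unfolding ipart_def by blast
        then have "C \<inter> W \<in> P" unfolding P_def using v by blast
        then show "v \<in> \<Union>P" using C v by blast
      qed
    qed
  next
    fix B assume "B \<in> P" then show "B \<noteq> {}" unfolding P_def by blast
  next
    fix B assume "B \<in> P"
    then obtain B' where "B' \<in> P'" "B = B' \<inter> W" unfolding P_def by blast
    then show "ind G B" using P'(1) unfolding ipart_def ind_def by blast
  next
    fix B1 B2 assume B: "B1 \<in> P" "B2 \<in> P" "B1 \<noteq> B2"
    then obtain C1 C2 where C: "C1 \<in> P'" "B1 = C1 \<inter> W" "C2 \<in> P'" "B2 = C2 \<inter> W" unfolding P_def by blast
    then have "C1 \<noteq> C2" using B by blast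
    then have "C1 \<inter> C2 = {}" using P'(1) C unfolding ipart_def by blast
    then show "B1 \<inter> B2 = {}" using C by blast
  qed
  have "card P \<le> card P'" unfolding P_def
    by (meson card_Diff1_le card_image_le fP' finite_imageI order_trans)
  moreover have "W \<subseteq> V G" using W W' by blast
  ultimately show ?thesis using chi_le_part[OF g _ p] P'(2) by linarith
qed

lemma chi_add:
  assumes g: "is_graph G" and S: "S \<subseteq> W" and W: "W \<subseteq> V G" and ne: "S \<noteq> {}" and iS: "ind G S"
  shows "chi (sub G W) \<le> chi (sub G (W - S)) + 1"
proof -
  obtain P where P: "ipart G (W - S) P" "card P = chi (sub G (W - S))"
    using chi_part[OF g, of "W - S"] W by blast
  have fP: "finite P" using ipart_finite[OF finite_sub_V[OF g, of "W - S"] P(1)] W by blast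
  have un: "\<Union>P = W - S" and disj: "\<And>B B'. B \<in> P \<Longrightarrow> B' \<in> P \<Longrightarrow> B \<noteq> B' \<Longrightarrow> B \<inter> B' = {}"
    and indB: "\<And>B. B \<in> P \<Longrightarrow> B \<noteq> {} \<and> ind G B"
    using P(1) unfolding ipart_def by auto
  have p: "ipart G W (insert S P)"
    unfolding ipart_def
  proof (intro conjI ballI impI)
    show "\<Union>(insert S P) = W" using un S by auto
  next
    fix B assume "B \<in> insert S P" then show "B \<noteq> {}" using ne indB by auto
  next
    fix B assume "B \<in> insert S P" then show "ind G B" using iS indB by auto
  next
    fix B B' assume B: "B \<in> insert S P" "B' \<in> insert S P" "B \<noteq> B'"
    have sub: "C \<subseteq> W - S" if "C \<in> P" for C using un that by blast
    show "B \<inter> B' = {}"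
    proof (cases "B = S")
      case True
      then have "B' \<in> P" using B by auto
      then show ?thesis using sub True by blast
    next
      case False
      then have "B \<in> P" using B by auto
      show ?thesis
      proof (cases "B' = S")
        case True then show ?thesis using sub \<open>B \<in> P\<close> by blast
      next
        case False then have "B' \<in> P" using B by auto
        then show ?thesis using disj \<open>B \<in> P\<close> B(3) by blast
      qed
    qed
  qed
  have "card (insert S P) \<le> card P + 1" by (simp add: card_insert_if fP)
  then show ?thesis using chi_le_part[OF g W p] P(2) by simp
qed

lemma clique_sub: "is_clique (sub G W) K \<longleftrightarrow> K \<subseteq> W \<and> clq G K"
  unfolding is_clique_def clq_def by auto

lemma cl_ge:
  assumes fW: "finite W" and K: "K \<subseteq> W" "clq G K"
  shows "card K \<le> cl (sub G W)"
proof -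
  have "{card K |K. is_clique (sub G W) K} \<subseteq> {..card W}"
    using fW by (auto simp: clique_sub intro: card_mono)
  then have fin: "finite {card K |K. is_clique (sub G W) K}" using finite_subset by blast
  show ?thesis unfolding cl_def
    by (rule Max_ge[OF fin]) (use K in \<open>auto simp: clique_sub\<close>)
qed

lemma cl_ex:
  assumes fW: "finite W"
  shows "\<exists>K. K \<subseteq> W \<and> clq G K \<and> card K = cl (sub G W)"
proof -
  have "{card K |K. is_clique (sub G W) K} \<subseteq> {..card W}"
    using fW by (auto simp: clique_sub intro: card_mono)
  then have fin: "finite {card K |K. is_clique (sub G W) K}" using finite_subset by blast
  have ne: "{card K |K. is_clique (sub G W) K} \<noteq> {}"
    using clique_sub[of G W "{}"] unfolding clq_def by auto
  have "cl (sub G W) \<in> {card K |K. is_clique (sub G W) K}"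
    unfolding cl_def by (rule Max_in[OF fin ne])
  then show ?thesis by (auto simp: clique_sub)
qed

lemma cl_mono:
  assumes fW': "finite W'" and W: "W \<subseteq> W'"
  shows "cl (sub G W) \<le> cl (sub G W')"
proof -
  obtain K where K: "K \<subseteq> W" "clq G K" "card K = cl (sub G W)"
    using cl_ex[of W G] finite_subset[OF W fW'] by blast
  show ?thesis using cl_ge[OF fW', of K G] K W by auto
qed

lemma cl_del:
  assumes fW: "finite W" and iS: "ind G S"
  shows "cl (sub G W) \<le> cl (sub G (W - S)) + 1"
proof -
  obtain K where K: "K \<subseteq> W" "clq G K" "card K = cl (sub G W)"
    using cl_ex[OF fW, of G] by blast
  have fK: "finite K" using K(1) fW finite_subset by blast
  have "card (K \<inter> S) \<le> Suc 0"
    using card_le_Suc0_iff_eq[of "K \<inter> S"] fK K(2) iS unfolding clq_def ind_def by blast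
  moreover have "card K = card (K - S) + card (K \<inter> S)"
    using card_Int_Diff[OF fK, of S] by simp
  moreover have "card (K - S) \<le> cl (sub G (W - S))"
    using cl_ge[of "W - S" "K - S" G] K fW unfolding clq_def by auto
  ultimately show ?thesis using K(3) by linarith
qed

lemma part_sum:
  assumes fW: "finite W" and p: "ipart G W P"
  shows "card W = (\<Sum>B\<in>P. card B)"
proof -
  have "card (\<Union>P) = sum card P"
  proof (rule card_Union_disjoint)
    show "pairwise disjnt P" using p unfolding ipart_def pairwise_def disjnt_def by blast
    fix A assume "A \<in> P" then show "finite A" using p fW unfolding ipart_def
      by (metis Union_upper finite_subset)
  qed
  then show ?thesis using p unfolding ipart_def by simp
qed



lemma ipart_replace:
  assumes p: "ipart G W N" and X: "X \<subseteq> N" and U: "\<Union>Y = \<Union>X"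
    and Yb: "\<And>D. D \<in> Y \<Longrightarrow> D \<noteq> {} \<and> ind G D"
    and Yd: "\<And>D D'. D \<in> Y \<Longrightarrow> D' \<in> Y \<Longrightarrow> D \<noteq> D' \<Longrightarrow> D \<inter> D' = {}"
  shows "ipart G W ((N - X) \<union> Y) \<and> (N - X) \<inter> Y = {}"
proof -
  have un: "\<Union>N = W" and disj: "\<And>B B'. B \<in> N \<Longrightarrow> B' \<in> N \<Longrightarrow> B \<noteq> B' \<Longrightarrow> B \<inter> B' = {}"
    and indB: "\<And>B. B \<in> N \<Longrightarrow> B \<noteq> {} \<and> ind G B"
    using p unfolding ipart_def by auto
  have dXY: "B \<inter> D = {}" if "B \<in> N - X" "D \<in> Y" for B D
  proof -
    have "D \<subseteq> \<Union>X" using U that(2) by blast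
    have "B \<inter> C = {}" if "C \<in> X" for C using disj[of B C] that \<open>B \<in> N - X\<close> X by blast
    then show ?thesis using \<open>D \<subseteq> \<Union>X\<close> by blast
  qed
  have part: "ipart G W ((N - X) \<union> Y)"
    unfolding ipart_def
  proof (intro conjI ballI impI)
    show "\<Union>(N - X \<union> Y) = W"
    proof
      show "\<Union>(N - X \<union> Y) \<subseteq> W" using U X un by blast
      show "W \<subseteq> \<Union>(N - X \<union> Y)"
      proof
        fix v assume "v \<in> W"
        then obtain B where B: "B \<in> N" "v \<in> B" using un by blast
        show "v \<in> \<Union>(N - X \<union> Y)"
        proof (cases "B \<in> X")
          case True then have "v \<in> \<Union>Y" using U B by blast
          then show ?thesis by blast
        next
          case False then show ?thesis using B by blast
        qed
      qed
    qed
  next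
    fix B assume "B \<in> N - X \<union> Y" then show "B \<noteq> {}" using indB Yb by blast
  next
    fix B assume "B \<in> N - X \<union> Y" then show "ind G B" using indB Yb by blast
  next
    fix B B' assume B: "B \<in> N - X \<union> Y" "B' \<in> N - X \<union> Y" "B \<noteq> B'"
    show "B \<inter> B' = {}"
    proof (cases "B \<in> Y")
      case True
      show ?thesis
      proof (cases "B' \<in> Y")
        case True then show ?thesis using Yd \<open>B \<in> Y\<close> B(3) by blast
      next
        case False then have "B' \<in> N - X" using B by blast
        then show ?thesis using dXY \<open>B \<in> Y\<close> by blast
      qed
    next
      case False then have BN: "B \<in> N - X" using B by blast
      show ?thesis
      proof (cases "B' \<in> Y")
        case True then show ?thesis using dXY BN by blast
      next
        case False then have "B' \<in> N - X" using B by blast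
        then show ?thesis using disj BN B(3) by blast
      qed
    qed
  qed
  have "(N - X) \<inter> Y = {}"
  proof (rule ccontr)
    assume "(N - X) \<inter> Y \<noteq> {}"
    then obtain D where "D \<in> N - X" "D \<in> Y" by blast
    then show False using dXY[of D D] Yb by blast
  qed
  then show ?thesis using part by blast
qed

lemma ipart_remove:
  assumes p: "ipart G W P" and B: "B \<in> P"
  shows "ipart G (W - B) (P - {B})"
  unfolding ipart_def
proof (intro conjI ballI impI)
  have un: "\<Union>P = W" and disj: "\<And>B B'. B \<in> P \<Longrightarrow> B' \<in> P \<Longrightarrow> B \<noteq> B' \<Longrightarrow> B \<inter> B' = {}"
    using p unfolding ipart_def by auto
  show "\<Union>(P - {B}) = W - B"
  proof
    show "\<Union>(P - {B}) \<subseteq> W - B"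
    proof
      fix v assume "v \<in> \<Union>(P - {B})"
      then obtain C where C: "C \<in> P" "C \<noteq> B" "v \<in> C" by blast
      then have "C \<inter> B = {}" using disj B by blast
      then show "v \<in> W - B" using C un by blast
    qed
    show "W - B \<subseteq> \<Union>(P - {B})" using un by blast
  qed
next
  fix C assume "C \<in> P - {B}" then show "C \<noteq> {}" "ind G C" using p unfolding ipart_def by auto
next
  fix C C' assume "C \<in> P - {B}" "C' \<in> P - {B}" "C \<noteq> C'"
  then show "C \<inter> C' = {}" using p unfolding ipart_def by auto
qed

locale mctx =
  fixes G :: graph and x y :: int
  assumes x0: "x \<ge> 0" and g: "is_graph G"
    and inM: "G \<in> M x y"
    and minl: "\<And>W. W \<subset> V G \<Longrightarrow> \<not> (int (card W) < int (chi (sub G W)) + 2 * (int (chi (sub G W)) - int (cl (sub G W))) - x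
                     \<and> int (chi (sub G W)) - int (cl (sub G W)) \<le> y)"
    and nsep: "\<not> separable G"
begin

abbreviation "n \<equiv> card (V G)"
abbreviation "ch \<equiv> chi G"
abbreviation "om \<equiv> cl G"

lemma finV: "finite (V G)" using g unfolding is_graph_def by simp

lemma subV: "sub G (V G) = G" using sub_self[OF g] .

lemma main_ineq: "int n < int ch + 2 * (int ch - int om) - x" "int ch - int om \<le> y"
  using inM unfolding M_def f_def by auto

lemma chW_le: "W \<subseteq> V G \<Longrightarrow> chi (sub G W) \<le> ch"
  using chi_mono[OF g, of W "V G"] subV by simp

lemma clW_le: "W \<subseteq> V G \<Longrightarrow> cl (sub G W) \<le> om"
  using cl_mono[OF finV, of W G] subV by simp

lemma ch_le_n: "ch \<le> n" using chi_le_card[OF g, of "V G"] subV by simp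

lemma step1: "int ch \<ge> int om + 1"
proof -
  have "int ch \<le> int n" using ch_le_n by simp
  then show ?thesis using main_ineq x0 by presburger
qed

lemma ch_pos: "ch \<ge> 1" using step1 by linarith

lemma opt_ex: "\<exists>P. ipart G (V G) P \<and> card P = ch"
  using chi_part[OF g, of "V G"] subV by simp

lemma ch_le_part: "ipart G (V G) P \<Longrightarrow> ch \<le> card P"
  using chi_le_part[OF g, of "V G" P] subV by simp

lemma indsing: "ind G {v}" unfolding ind_def by simp

lemma vcrit_cl:
  assumes v: "v \<in> V G" and c: "chi (sub G (V G - {v})) \<ge> ch"
  shows "cl (sub G (V G - {v})) < om"
proof (rule ccontr)
  let ?W = "V G - {v}"
  assume a: "\<not> cl (sub G ?W) < om"
  have W: "?W \<subset> V G" using v by blast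
  have c1: "chi (sub G ?W) = ch" using c chW_le[of ?W] by simp
  have c2: "cl (sub G ?W) = om" using a clW_le[of ?W] by simp
  have cw: "card ?W = n - 1" using v finV by simp
  have "n \<ge> 1" using v finV by (metis card_0_eq empty_iff less_one not_less)
  then show False using minl[OF W] c1 c2 cw main_ineq by simp
qed

lemma alpha2:
  assumes I: "I \<subseteq> V G" and iI: "ind G I"
  shows "card I \<le> 2"
proof (rule ccontr)
  assume "\<not> card I \<le> 2"
  then obtain I3 where I3: "I3 \<subseteq> I" "card I3 = 3" "finite I3"
    using obtain_subset_with_card_n[of 3 I] by force
  have iI3: "ind G I3" using iI I3(1) unfolding ind_def by blast
  let ?W = "V G - I3"
  have I3V: "I3 \<subseteq> V G" using I I3 by blast
  have "I3 \<noteq> {}" using I3(2) by auto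
  then have W: "?W \<subset> V G" using I3V by blast
  have cw: "card ?W = n - 3" using card_Diff_subset[OF I3(3) I3V] I3(2) by simp
  have n3: "n \<ge> 3" using card_mono[OF finV I3V] I3 by simp
  have ne: "I3 \<noteq> {}" using I3 by auto
  have ca: "ch \<le> chi (sub G ?W) + 1" using chi_add[OF g _ _ ne iI3, of "V G"] I3V subV by simp
  have cd: "om \<le> cl (sub G ?W) + 1" using cl_del[OF finV iI3] subV by simp
  show False
  proof (cases "chi (sub G ?W) < ch")
    case True
    then have "chi (sub G ?W) = ch - 1" using ca by linarith
    moreover have "cl (sub G ?W) \<le> om" using clW_le[of ?W] by blast
    ultimately show False using minl[OF W] cw n3 cd main_ineq ch_pos by (simp; linarith)
  next
    case False
    obtain a b c where abc: "I3 = {a,b,c}" "a \<noteq> b" using I3(2) unfolding card_3_iff by blast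
    have key: "v \<in> K" if "v \<in> I3" "K \<subseteq> V G" "clq G K" "card K = om" for v K
    proof (rule ccontr)
      assume "v \<notin> K"
      have vV: "v \<in> V G" using that I3V by blast
      have "chi (sub G ?W) \<le> chi (sub G (V G - {v}))"
        using chi_mono[OF g, of ?W "V G - {v}"] that(1) by blast
      then have "cl (sub G (V G - {v})) < om" using vcrit_cl[OF vV] False by simp
      moreover have "card K \<le> cl (sub G (V G - {v}))"
        using cl_ge[of "V G - {v}" K G] finV that \<open>v \<notin> K\<close> by blast
      ultimately show False using that by simp
    qed
    obtain K where K: "K \<subseteq> V G" "clq G K" "card K = om" using cl_ex[OF finV, of G] subV by auto
    have "a \<in> K" "b \<in> K" using key K abc by auto
    then have "{a,b} \<in> E G" using K(2) abc unfolding clq_def by blast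
    moreover have "{a,b} \<notin> E G" using iI3 abc unfolding ind_def by blast
    ultimately show False by blast
  qed
qed

lemma block_le2:
  assumes p: "ipart G W P" and W: "W \<subseteq> V G" and B: "B \<in> P"
  shows "card B \<le> 2" "finite B" "B \<subseteq> V G"
proof -
  have "\<Union>P = W" "ind G B" using p B unfolding ipart_def by auto
  then show BV: "B \<subseteq> V G" using W B by blast
  then show "card B \<le> 2" using alpha2 \<open>ind G B\<close> by blast
  show "finite B" using BV finV finite_subset by blast
qed

lemma merge_E:
  assumes p: "ipart G (V G) P" "card P = ch" and ab: "{a} \<in> P" "{b} \<in> P" "a \<noteq> b"
  shows "{a,b} \<in> E G"
proof (rule ccontr)
  assume nab: "{a,b} \<notin> E G"
  define X where "X = {{a},{b}}"
  define Y where "Y = {{a,b}}"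
  have X: "X \<subseteq> P" unfolding X_def using ab by blast
  have U: "\<Union>Y = \<Union>X" unfolding X_def Y_def by blast
  have Yb: "D \<noteq> {} \<and> ind G D" if "D \<in> Y" for D
    using that nab unfolding Y_def ind_def by (auto simp: insert_commute)
  have Yd: "D \<inter> D' = {}" if "D \<in> Y" "D' \<in> Y" "D \<noteq> D'" for D D'
    using that unfolding Y_def by blast
  have r: "ipart G (V G) ((P - X) \<union> Y) \<and> (P - X) \<inter> Y = {}"
    by (rule ipart_replace[OF p(1) X U Yb Yd])
  have fP: "finite P" using ipart_finite[OF finV p(1)] .
  have cX: "card X = 2" unfolding X_def using ab(3) by simp
  have "card (P - X) = card P - 2" using card_Diff_subset[of X P] X cX unfolding X_def by simp
  moreover have "card ((P - X) \<union> Y) = card (P - X) + card Y"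
    by (rule card_Un_disjoint) (use fP r in \<open>auto simp: Y_def\<close>)
  moreover have "card Y = 1" unfolding Y_def by simp
  moreover have "card P \<ge> 2" using card_mono[OF fP X] cX by simp
  ultimately have "card ((P - X) \<union> Y) = card P - 1" by simp
  then show False using ch_le_part[of "(P - X) \<union> Y"] r p(2) ch_pos by simp
qed

lemma crit:
  assumes v: "v \<in> V G"
  shows "chi (sub G (V G - {v})) < ch"
proof (rule ccontr)
  assume a: "\<not> chi (sub G (V G - {v})) < ch"
  then have cv: "chi (sub G (V G - {v})) = ch" using chW_le[of "V G - {v}"] by simp
  have clv: "cl (sub G (V G - {v})) < om" using vcrit_cl[OF v] cv by simp
  obtain P where P: "ipart G (V G) P" "card P = ch" using opt_ex by blast
  have fP: "finite P" using ipart_finite[OF finV P(1)] .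
  obtain B where B: "B \<in> P" "v \<in> B" using P(1) v unfolding ipart_def by blast
  show False
  proof (cases "B = {v}")
    case True
    have "ipart G (V G - {v}) (P - {B})" using ipart_remove[OF P(1) B(1)] True by simp
    then have "chi (sub G (V G - {v})) \<le> card (P - {B})" using chi_le_part[OF g] by blast
    then show False using cv P(2) B fP ch_pos by simp
  next
    case False
    then obtain u where u: "u \<in> B" "u \<noteq> v" using B by blast
    have Bfin: "finite B" "card B \<le> 2" using block_le2[OF P(1) _ B(1)] by auto
    have "card {u,v} = 2" using u by simp
    then have Beq: "B = {v,u}" using card_seteq[OF Bfin(1), of "{v,u}"] u B Bfin by auto
    have indB: "ind G B" using P(1) B unfolding ipart_def by blast
    let ?W = "V G - B"
    have uV: "u \<in> V G" using block_le2[OF P(1) _ B(1)] u by blast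
    have W: "?W \<subset> V G" using B v by blast
    have "ipart G ?W (P - {B})" using ipart_remove[OF P(1) B(1)] .
    then have c1: "chi (sub G ?W) \<le> ch - 1" using chi_le_part[OF g, of ?W] P(2) B fP by fastforce
    have eqW: "V G - {v} - {u} = ?W" using Beq by blast
    have "chi (sub G (V G - {v})) \<le> chi (sub G (V G - {v} - {u})) + 1"
      by (rule chi_add[OF g]) (use u uV indsing in auto)
    then have c2: "chi (sub G ?W) \<ge> ch - 1" using cv eqW by simp
    have l1: "cl (sub G ?W) \<le> cl (sub G (V G - {v}))"
      using cl_mono[of "V G - {v}" ?W G] finV B by blast
    have l2: "om \<le> cl (sub G ?W) + 1" using cl_del[OF finV indB] subV by simp
    have cw: "card ?W = n - 2" using card_Diff_subset[OF Bfin(1)] block_le2[OF P(1) _ B(1)] Beq u by simp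
    have n2: "n \<ge> 2" using card_mono[OF finV, of B] block_le2[OF P(1) _ B(1)] Beq u by simp
    have "chi (sub G ?W) = ch - 1" using c1 c2 by simp
    moreover have "cl (sub G ?W) = om - 1" using l1 l2 clv by simp
    moreover have "om \<ge> 1" using clv by simp
    ultimately show False using minl[OF W] cw n2 main_ineq ch_pos step1 by (simp add: of_nat_diff; linarith)
  qed
qed

end


lemma ipart_insert:
  assumes P: "ipart G (W - S) P" and S: "S \<subseteq> W" and ne: "S \<noteq> {}" and iS: "ind G S"
  shows "ipart G W (insert S P)"
proof -
  have un: "\<Union>P = W - S" and disj: "\<And>B B'. B \<in> P \<Longrightarrow> B' \<in> P \<Longrightarrow> B \<noteq> B' \<Longrightarrow> B \<inter> B' = {}"
    and indB: "\<And>B. B \<in> P \<Longrightarrow> B \<noteq> {} \<and> ind G B"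
    using P unfolding ipart_def by auto
  show "ipart G W (insert S P)"
    unfolding ipart_def
  proof (intro conjI ballI impI)
    show "\<Union>(insert S P) = W" using un S by auto
  next
    fix B assume "B \<in> insert S P" then show "B \<noteq> {}" using ne indB by auto
  next
    fix B assume "B \<in> insert S P" then show "ind G B" using iS indB by auto
  next
    fix B B' assume B: "B \<in> insert S P" "B' \<in> insert S P" "B \<noteq> B'"
    have sub: "C \<subseteq> W - S" if "C \<in> P" for C using un that by blast
    show "B \<inter> B' = {}"
    proof (cases "B = S")
      case True
      then have "B' \<in> P" using B by auto
      then show ?thesis using sub True by blast
    next
      case False
      then have "B \<in> P" using B by auto
      show ?thesis
      proof (cases "B' = S")
        case True then show ?thesis using sub \<open>B \<in> P\<close> by blast
      next
        case False then have "B' \<in> P" using B by auto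
        then show ?thesis using disj \<open>B \<in> P\<close> B(3) by blast
      qed
    qed
  qed
qed

context mctx
begin

lemma nlow: "int n \<ge> int ch + 2 * (int ch - int om) - x - 1"
proof (rule ccontr)
  assume a: "\<not> int n \<ge> int ch + 2 * (int ch - int om) - x - 1"
  obtain P where P: "ipart G (V G) P" "card P = ch" using opt_ex by blast
  have fP: "finite P" using ipart_finite[OF finV P(1)] .
  show False
  proof (cases "\<exists>B\<in>P. card B \<ge> 2")
    case True
    then obtain B where B: "B \<in> P" "card B \<ge> 2" by blast
    have BV: "B \<subseteq> V G" and fB: "finite B" using block_le2[OF P(1) _ B(1)] by auto
    have indB: "ind G B" and neB: "B \<noteq> {}" using P(1) B unfolding ipart_def by auto
    let ?W = "V G - B"
    have W: "?W \<subset> V G" using BV neB by blast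
    have "ipart G ?W (P - {B})" using ipart_remove[OF P(1) B(1)] .
    then have c1: "chi (sub G ?W) \<le> ch - 1" using chi_le_part[OF g, of ?W] P(2) B fP by fastforce
    have c2: "ch \<le> chi (sub G ?W) + 1" using chi_add[OF g BV _ neB indB] subV by simp
    have l1: "cl (sub G ?W) \<le> om" using clW_le[of ?W] by blast
    have l2: "om \<le> cl (sub G ?W) + 1" using cl_del[OF finV indB] subV by simp
    have cw: "card ?W = n - card B" using card_Diff_subset[OF fB BV] .
    have cB: "card B \<le> n" using card_mono[OF finV BV] .
    have "chi (sub G ?W) = ch - 1" using c1 c2 by simp
    then show False using minl[OF W] cw cB B(2) l1 l2 main_ineq ch_pos a by (simp add: of_nat_diff; linarith)
  next
    case False
    have blk1: "B = {v}" if "B \<in> P" "v \<in> B" for B v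
    proof -
      have "card B \<le> 1" using False that by auto
      moreover have "finite B" using block_le2[OF P(1) _ that(1)] by auto
      ultimately show ?thesis using that card_le_Suc0_iff_eq by fastforce
    qed
    have "clq G (V G)" unfolding clq_def
    proof (intro ballI impI)
      fix a b assume ab: "a \<in> V G" "b \<in> V G" "a \<noteq> b"
      obtain A where "A \<in> P" "a \<in> A" using P(1) ab unfolding ipart_def by blast
      then have Aa: "{a} \<in> P" using blk1 by blast
      obtain B where "B \<in> P" "b \<in> B" using P(1) ab unfolding ipart_def by blast
      then have Bb: "{b} \<in> P" using blk1 by blast
      show "{a,b} \<in> E G" using merge_E[OF P Aa Bb ab(3)] .
    qed
    then have "n \<le> om" using cl_ge[OF finV, of "V G" G] subV by simp
    then show False using ch_le_n step1 by linarith
  qed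
qed

lemma Vne: "V G \<noteq> {}" using ch_le_n ch_pos by auto

lemma nup: "int n \<le> 2 * int ch - 1"
proof -
  obtain v where v: "v \<in> V G" using Vne by blast
  obtain P where P: "ipart G (V G - {v}) P" "card P = chi (sub G (V G - {v}))"
    using chi_part[OF g, of "V G - {v}"] by blast
  have fP: "finite P" using ipart_finite[OF _ P(1)] finV by simp
  have "card (V G - {v}) = (\<Sum>B\<in>P. card B)" using part_sum[OF _ P(1)] finV by simp
  also have "\<dots> \<le> (\<Sum>B\<in>P. 2)" by (rule sum_mono) (use block_le2[OF P(1)] in blast)
  also have "\<dots> = 2 * card P" by simp
  finally have "card (V G - {v}) \<le> 2 * card P" .
  moreover have "card P < ch" using crit[OF v] P(2) by simp
  moreover have "card (V G - {v}) = n - 1" using v finV by simp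
  moreover have "n \<ge> 1" using v finV card_0_eq by fastforce
  ultimately show ?thesis by linarith
qed

definition opt where "opt N \<longleftrightarrow> ipart G (V G) N \<and> card N = ch"
definition sing where "sing N = {v. {v} \<in> N}"

lemma sing_V: "opt N \<Longrightarrow> sing N \<subseteq> V G"
  unfolding opt_def sing_def ipart_def by blast

lemma sing_count:
  assumes N: "opt N"
  shows "card (sing N) + n = 2 * ch"
proof -
  have p: "ipart G (V G) N" and cN: "card N = ch" using N unfolding opt_def by auto
  have fN: "finite N" using ipart_finite[OF finV p] .
  have cb: "card B = 1 \<or> card B = 2" if "B \<in> N" for B
  proof -
    have "card B \<le> 2" "finite B" using block_le2[OF p _ that] by auto
    moreover have "B \<noteq> {}" using p that unfolding ipart_def by auto
    ultimately show ?thesis by (metis One_nat_def card_0_eq le_Suc_eq le_zero_eq numeral_2_eq_2)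
  qed
  have "(\<Sum>B\<in>N. card B + (if card B = 1 then 1 else 0)) = (\<Sum>B\<in>N. (2::nat))"
    by (rule sum.cong) (use cb in auto)
  then have s: "(\<Sum>B\<in>N. card B) + (\<Sum>B\<in>N. if card B = 1 then 1 else (0::nat)) = 2 * card N"
    by (simp add: sum.distrib)
  have "(\<Sum>B\<in>N. if card B = 1 then 1 else (0::nat)) = card {B\<in>N. card B = 1}"
    using fN by (simp add: sum.If_cases Int_def)
  moreover have "{B\<in>N. card B = 1} = (\<lambda>v. {v}) ` sing N"
  proof
    show "{B\<in>N. card B = 1} \<subseteq> (\<lambda>v. {v}) ` sing N"
    proof
      fix B assume "B \<in> {B\<in>N. card B = 1}"
      then have BN: "B \<in> N" "card B = 1" by auto
      then obtain v where "B = {v}" by (metis card_1_singletonE)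
      with BN have "B = {v}" "B \<in> N" by auto
      then show "B \<in> (\<lambda>v. {v}) ` sing N" unfolding sing_def by blast
    qed
    show "(\<lambda>v. {v}) ` sing N \<subseteq> {B\<in>N. card B = 1}" unfolding sing_def by auto
  qed
  moreover have "card ((\<lambda>v. {v}) ` sing N) = card (sing N)" by (rule card_image) (simp add: inj_on_def)
  moreover have "n = (\<Sum>B\<in>N. card B)" using part_sum[OF finV p] .
  ultimately show ?thesis using s cN by simp
qed

lemma opt_merge: "opt N \<Longrightarrow> a \<in> sing N \<Longrightarrow> b \<in> sing N \<Longrightarrow> a \<noteq> b \<Longrightarrow> {a,b} \<in> E G"
  unfolding opt_def sing_def using merge_E by blast

end


context mctx
begin

lemma exch:
  assumes P: "opt P" and N0: "opt N0" "{t} \<in> N0"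
  shows "\<exists>N. opt N \<and> {t} \<in> N \<and> sing N \<subseteq> insert t (sing P)"
proof -
  obtain N where N: "opt N" "{t} \<in> N" and mn: "\<And>N'. opt N' \<and> {t} \<in> N' \<Longrightarrow> card (N - P) \<le> card (N' - P)"
    using ex_has_least_nat[of "\<lambda>N. opt N \<and> {t} \<in> N" N0 "\<lambda>N. card (N - P)"] N0 by blast
  have pN: "ipart G (V G) N" and cN: "card N = ch" using N unfolding opt_def by auto
  have pP: "ipart G (V G) P" using P unfolding opt_def by auto
  have fN: "finite N" using ipart_finite[OF finV pN] .
  have fP: "finite P" using ipart_finite[OF finV pP] .
  have unN: "\<Union>N = V G" and disjN: "\<And>B B'. B \<in> N \<Longrightarrow> B' \<in> N \<Longrightarrow> B \<noteq> B' \<Longrightarrow> B \<inter> B' = {}"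
    using pN unfolding ipart_def by auto
  have unP: "\<Union>P = V G" and disjP: "\<And>B B'. B \<in> P \<Longrightarrow> B' \<in> P \<Longrightarrow> B \<noteq> B' \<Longrightarrow> B \<inter> B' = {}"
    using pP unfolding ipart_def by auto
  have pair: "\<exists>z. z \<noteq> a \<and> B = {a,z}" if Q: "ipart G (V G) Q" and BQ: "B \<in> Q" and aB: "a \<in> B" and Ba: "B \<noteq> {a}" for Q B a
  proof -
    obtain z where z: "z \<in> B" "z \<noteq> a" using aB Ba by blast
    have "finite B" "card B \<le> 2" using block_le2[OF Q _ BQ] by auto
    moreover have "card {a,z} = 2" using z by simp
    ultimately have "{a,z} = B" using card_seteq[of B "{a,z}"] z aB by auto
    then show ?thesis using z by blast
  qed
  have "sing N \<subseteq> insert t (sing P)"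
  proof
    fix y assume y: "y \<in> sing N"
    show "y \<in> insert t (sing P)"
    proof (rule ccontr)
      assume ny: "y \<notin> insert t (sing P)"
      then have yt: "y \<noteq> t" and yP: "{y} \<notin> P" unfolding sing_def by auto
      have yN: "{y} \<in> N" using y unfolding sing_def by simp
      have "y \<in> \<Union>N" using yN by blast
      then have yV: "y \<in> V G" using unN by simp
      have "y \<in> \<Union>P" using unP yV by simp
      then obtain B where B: "B \<in> P" "y \<in> B" by blast
      then have "B \<noteq> {y}" using yP by blast
      then obtain y1 where y1: "y1 \<noteq> y" "B = {y,y1}" using pair[OF pP B] by blast
      have indB: "ind G B" using pP B(1) unfolding ipart_def by blast
      have BP: "{y,y1} \<in> P" using B(1) y1(2) by simp
      have nE1: "{y,y1} \<notin> E G" using indB y1 unfolding ind_def by auto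
      have y1B: "y1 \<in> B" using y1(2) by simp
      then have "y1 \<in> \<Union>P" using B(1) by blast
      then have y1V: "y1 \<in> V G" using unP by simp
      have "y1 \<in> \<Union>N" using unN y1V by simp
      then obtain C where C: "C \<in> N" "y1 \<in> C" by blast
      have "C \<noteq> {y1}"
      proof
        assume "C = {y1}"
        then have s1: "y1 \<in> sing N" using C(1) unfolding sing_def by simp
        have "y \<noteq> y1" using y1(1) by simp
        then have "{y,y1} \<in> E G" using opt_merge[OF N(1) y s1] by simp
        then show False using nE1 by simp
      qed
      then obtain y2 where y2: "y2 \<noteq> y1" "C = {y1,y2}" using pair[OF pN C] by blast
      have y2y: "y2 \<noteq> y"
      proof
        assume "y2 = y"
        then have "C \<noteq> {y}" "y \<in> C" using y2 y1 by auto
        then show False using disjN[OF C(1) yN] by blast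
      qed
      have tC: "t \<notin> C"
      proof
        assume tC: "t \<in> C"
        have "C \<noteq> {t}" using y2 by auto
        then show False using disjN[OF C(1) N(2)] tC by blast
      qed
      define X where "X = {{y}, C}"
      define Y where "Y = {{y,y1}, {y2}}"
      have XN: "X \<subseteq> N" unfolding X_def using yN C by blast
      have U: "\<Union>Y = \<Union>X" unfolding X_def Y_def using y2(2) by auto
      have Yb: "D \<noteq> {} \<and> ind G D" if "D \<in> Y" for D
        using that nE1 unfolding Y_def ind_def by (auto simp: insert_commute)
      have Yd: "D \<inter> D' = {}" if "D \<in> Y" "D' \<in> Y" "D \<noteq> D'" for D D'
        using that y2 y2y unfolding Y_def by auto
      have r: "ipart G (V G) ((N - X) \<union> Y) \<and> (N - X) \<inter> Y = {}"
        by (rule ipart_replace[OF pN XN U Yb Yd])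
      have cX: "card X = 2" unfolding X_def using y2 y1 by (auto simp: doubleton_eq_iff)
      have cY: "card Y = 2" unfolding Y_def using y1 by (auto simp: doubleton_eq_iff)
      have fX: "finite X" unfolding X_def by simp
      have cNX: "card (N - X) = card N - 2" using card_Diff_subset[OF fX XN] cX by simp
      have c2: "card N \<ge> 2" using card_mono[OF fN XN] cX by simp
      have "card ((N - X) \<union> Y) = card (N - X) + card Y"
        by (rule card_Un_disjoint) (use fN r in \<open>auto simp: Y_def\<close>)
      then have cN1: "card ((N - X) \<union> Y) = card N" using cNX cY c2 by simp
      have o1: "opt ((N - X) \<union> Y)" unfolding opt_def using r cN1 cN by simp
      have t1: "{t} \<in> (N - X) \<union> Y" using N(2) yt tC unfolding X_def by auto
      have CP: "C \<notin> P"
      proof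
        assume "C \<in> P"
        moreover have "C \<noteq> B" using y2 y2y y1 by (auto simp: doubleton_eq_iff)
        ultimately have "C \<inter> B = {}" using disjP[OF _ B(1)] by blast
        then show False using C(2) y1B by blast
      qed
      have XP: "X \<subseteq> N - P" using XN yP CP unfolding X_def by blast
      have "(N - X) \<union> Y - P \<subseteq> ((N - P) - X) \<union> {{y2}}"
        using BP unfolding Y_def by blast
      then have "card ((N - X) \<union> Y - P) \<le> card (((N - P) - X) \<union> {{y2}})"
        by (rule card_mono[rotated]) (use fN in simp)
      also have "\<dots> \<le> card ((N - P) - X) + 1" using card_Un_le[of "(N - P) - X" "{{y2}}"] by simp
      also have "card ((N - P) - X) = card (N - P) - 2"
        using card_Diff_subset[OF fX XP] cX by simp
      finally have le1: "card ((N - X) \<union> Y - P) \<le> card (N - P) - 2 + 1" .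
      have "card X \<le> card (N - P)" using card_mono[OF _ XP] fN by simp
      then have lt: "card ((N - X) \<union> Y - P) < card (N - P)" using le1 cX by simp
      show False using mn[of "(N - X) \<union> Y"] o1 t1 lt by simp
    qed
  qed
  then show ?thesis using N by blast
qed

lemma crit_opt:
  assumes v: "v \<in> V G"
  shows "\<exists>N. opt N \<and> {v} \<in> N"
proof -
  obtain P where P: "ipart G (V G - {v}) P" "card P = chi (sub G (V G - {v}))"
    using chi_part[OF g, of "V G - {v}"] by blast
  have fP: "finite P" using ipart_finite[OF _ P(1)] finV by simp
  have p: "ipart G (V G) (insert {v} P)" using ipart_insert[OF P(1)] v indsing by blast
  have "card (insert {v} P) \<le> card P + 1" by (simp add: card_insert_if fP)
  then have "card (insert {v} P) \<le> ch" using crit[OF v] P(2) by simp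
  moreover have "ch \<le> card (insert {v} P)" using ch_le_part[OF p] .
  ultimately show ?thesis using p unfolding opt_def by (intro exI[of _ "insert {v} P"]) auto
qed

lemma sing_le1:
  assumes P: "opt P"
  shows "card (sing P) \<le> 1"
proof (rule ccontr)
  assume "\<not> card (sing P) \<le> 1"
  moreover have fs: "finite (sing P)" using sing_V[OF P] finV finite_subset by blast
  ultimately obtain u w where uw: "u \<in> sing P" "w \<in> sing P" "u \<noteq> w"
    using card_le_Suc0_iff_eq[OF fs] by auto
  define T where "T = {t \<in> V G. t \<noteq> w \<and> (\<exists>N. opt N \<and> t \<in> sing N \<and> w \<in> sing N)}"
  have uT: "u \<in> T" unfolding T_def using uw P sing_V[OF P] by blast
  have wT: "w \<notin> T" unfolding T_def by blast
  have wV: "w \<in> V G" using uw sing_V[OF P] by blast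
  have TV: "T \<subseteq> V G" unfolding T_def by blast
  have clos: "t' \<in> T" if t: "t \<in> T" and t': "t' \<in> V G" "t' \<noteq> t" "{t,t'} \<notin> E G" for t t'
  proof -
    obtain N where N: "opt N" "t \<in> sing N" "w \<in> sing N" and tw: "t \<noteq> w" and tV: "t \<in> V G"
      using t unfolding T_def by blast
    have t'N: "t' \<notin> sing N"
    proof
      assume "t' \<in> sing N"
      then have "{t,t'} \<in> E G" using opt_merge[OF N(1) N(2)] t' by blast
      then show False using t' by blast
    qed
    obtain N' where N': "opt N'" "{t'} \<in> N'" using crit_opt[OF t'(1)] by blast
    obtain N2 where N2: "opt N2" "{t'} \<in> N2" "sing N2 \<subseteq> insert t' (sing N)"
      using exch[OF N(1) N'] by blast
    have fsN: "finite (sing N)" using sing_V[OF N(1)] finV finite_subset by blast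
    have ceq: "card (sing N2) = card (sing N)" using sing_count[OF N(1)] sing_count[OF N2(1)] by simp
    have "t \<in> sing N2 \<or> w \<in> sing N2"
    proof (rule ccontr)
      assume "\<not> (t \<in> sing N2 \<or> w \<in> sing N2)"
      then have "sing N2 \<subseteq> insert t' (sing N - {t, w})" using N2(3) by blast
      then have "card (sing N2) \<le> card (insert t' (sing N - {t, w}))"
        by (rule card_mono[rotated]) (use fsN in simp)
      also have "\<dots> \<le> card (sing N - {t, w}) + 1" using card_insert_le_m1 
        by (simp add: card_insert_if fsN)
      also have "card (sing N - {t, w}) = card (sing N) - 2"
        using card_Diff_subset[of "{t,w}" "sing N"] N tw by simp
      finally show False using ceq card_mono[OF fsN, of "{t,w}"] N tw by simp
    qed
    moreover have "t \<notin> sing N2"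
    proof
      assume "t \<in> sing N2"
      then have "{t,t'} \<in> E G" using opt_merge[OF N2(1), of t t'] N2(2) t' unfolding sing_def by blast
      then show False using t' by blast
    qed
    ultimately have "w \<in> sing N2" by blast
    moreover have "t' \<noteq> w" using t'N N(3) by blast
    moreover have "t' \<in> sing N2" using N2(2) unfolding sing_def by simp
    ultimately show "t' \<in> T" unfolding T_def using t' N2(1) by blast
  qed
  have "separable G"
    unfolding separable_def
  proof (intro exI conjI)
    show "is_graph (sub G T)" using is_graph_sub[OF g TV] .
    show "is_graph (sub G (V G - T))" using is_graph_sub[OF g] by blast
    show "V (sub G T) \<inter> V (sub G (V G - T)) = {}" by auto
    show "V (sub G T) \<noteq> {}" using uT by auto
    show "V (sub G (V G - T)) \<noteq> {}" using wT wV by auto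
    have Vu: "T \<union> (V G - T) = V G" using TV by blast
    have Ee: "E G = {e \<in> E G. e \<subseteq> T} \<union> {e \<in> E G. e \<subseteq> V G - T} \<union> {{a, b} |a b. a \<in> T \<and> b \<in> V G - T}"
    proof
      show "E G \<subseteq> {e \<in> E G. e \<subseteq> T} \<union> {e \<in> E G. e \<subseteq> V G - T} \<union> {{a, b} |a b. a \<in> T \<and> b \<in> V G - T}"
      proof
        fix e assume e: "e \<in> E G"
        then obtain p q where pq: "e = {p,q}" "p \<in> V G" "q \<in> V G" using g unfolding is_graph_def by blast
        show "e \<in> {e \<in> E G. e \<subseteq> T} \<union> {e \<in> E G. e \<subseteq> V G - T} \<union> {{a, b} |a b. a \<in> T \<and> b \<in> V G - T}"
        proof (cases "p \<in> T")
          case True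
          show ?thesis
          proof (cases "q \<in> T")
            case True then show ?thesis using e pq \<open>p \<in> T\<close> by blast
          next
            case False then show ?thesis using pq \<open>p \<in> T\<close> by blast
          qed
        next
          case False
          show ?thesis
          proof (cases "q \<in> T")
            case True then have "e = {q,p}" using pq by (simp add: insert_commute)
            then show ?thesis using pq \<open>p \<notin> T\<close> True by blast
          next
            case False then show ?thesis using e pq \<open>p \<notin> T\<close> by blast
          qed
        qed
      qed
      show "{e \<in> E G. e \<subseteq> T} \<union> {e \<in> E G. e \<subseteq> V G - T} \<union> {{a, b} |a b. a \<in> T \<and> b \<in> V G - T} \<subseteq> E G"
      proof
        fix e assume e: "e \<in> {e \<in> E G. e \<subseteq> T} \<union> {e \<in> E G. e \<subseteq> V G - T} \<union> {{a, b} |a b. a \<in> T \<and> b \<in> V G - T}"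
        show "e \<in> E G"
        proof (cases "e \<in> {{a, b} |a b. a \<in> T \<and> b \<in> V G - T}")
          case True
          then obtain a b where ab: "e = {a,b}" "a \<in> T" "b \<in> V G" "b \<notin> T" by blast
          have "a \<noteq> b" using ab by blast
          then show ?thesis using clos[OF ab(2) ab(3)] ab by blast
        next
          case False then show ?thesis using e by blast
        qed
      qed
    qed
    have "join (sub G T) (sub G (V G - T)) = (T \<union> (V G - T), {e\<in>E G. e\<subseteq>T} \<union> {e\<in>E G. e \<subseteq> V G - T} \<union> {{a,b}|a b. a\<in>T \<and> b\<in>V G - T})"
      unfolding join_def by simp
    also have "\<dots> = (V G, E G)" using Vu Ee by simp
    also have "(V G, E G) = G" by (simp add: V_def E_def)
    finally show "G = join (sub G T) (sub G (V G - T))" by simp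
  qed
  then show False using nsep by blast
qed

lemma nfinal: "int n = 2 * int ch - 1"
proof -
  obtain P where "ipart G (V G) P" "card P = ch" using opt_ex by blast
  then have P: "opt P" unfolding opt_def by simp
  show ?thesis using sing_count[OF P] sing_le1[OF P] nup by linarith
qed

lemma ramsey_part: "int n < int (ramsey3 (int om + 1))"
proof -
  obtain r :: nat where r: "\<forall>(V'::nat set) (E'::nat set set). finite V' \<and> card V' \<ge> r \<longrightarrow>
      (\<exists>R \<subseteq> V'. card R = om + 1 \<and> clique R E' \<or> card R = 3 \<and> indep R E')"
    using ramsey2[of "om + 1" 3] by blast
  define Q where "Q = (\<lambda>m. \<forall>G'. is_graph G' \<and> card (V G') \<ge> m \<longrightarrow>
      (\<exists>K. is_clique G' K \<and> int (card K) = int om + 1) \<or> (\<exists>I. is_indep G' I \<and> card I = 3))"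
  have Qr: "Q r" unfolding Q_def
  proof (intro allI impI)
    fix G' assume G': "is_graph G' \<and> r \<le> card (V G')"
    then have "finite (V G')" unfolding is_graph_def by simp
    then obtain R where R: "R \<subseteq> V G'" "card R = om + 1 \<and> clique R (E G') \<or> card R = 3 \<and> indep R (E G')"
      using r[rule_format, of "V G'" "E G'"] G' by auto
    show "(\<exists>K. is_clique G' K \<and> int (card K) = int om + 1) \<or> (\<exists>I. is_indep G' I \<and> card I = 3)"
    proof (cases "card R = om + 1 \<and> clique R (E G')")
      case True
      then have "is_clique G' R" using R unfolding is_clique_def clique_def by blast
      then show ?thesis using True by auto
    next
      case False
      then have "card R = 3" "indep R (E G')" using R by auto
      moreover have "is_indep G' R" unfolding is_indep_def
      proof (intro conjI ballI)
        show "R \<subseteq> V G'" using R by blast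
        fix u v assume "u \<in> R" "v \<in> R"
        then show "{u, v} \<notin> E G'"
          using \<open>indep R (E G')\<close> noloop[of G' u] G' unfolding indep_def by (cases "u = v") auto
      qed
      ultimately show ?thesis by blast
    qed
  qed
  show ?thesis
  proof (rule ccontr)
    assume "\<not> int n < int (ramsey3 (int om + 1))"
    then have le: "ramsey3 (int om + 1) \<le> n" by simp
    have req: "ramsey3 (int om + 1) = (LEAST m. Q m)" unfolding ramsey3_def Q_def by (rule refl)
    have "Q (LEAST m. Q m)" by (rule LeastI[of Q r, OF Qr])
    then have "Q (ramsey3 (int om + 1))" using req by simp
    then have "is_graph G \<and> ramsey3 (int om + 1) \<le> card (V G) \<longrightarrow>
      (\<exists>K. is_clique G K \<and> int (card K) = int om + 1) \<or> (\<exists>I. is_indep G I \<and> card I = 3)"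
      unfolding Q_def by (rule spec)
    then have "(\<exists>K. is_clique G K \<and> int (card K) = int om + 1) \<or> (\<exists>I. is_indep G I \<and> card I = 3)"
      using g le by blast
    then show False
    proof
      assume "\<exists>K. is_clique G K \<and> int (card K) = int om + 1"
      then obtain K where K: "is_clique G K" "card K = om + 1" by auto
      have "K \<subseteq> V G" "clq G K" using K unfolding is_clique_def clq_def by auto
      then have "card K \<le> om" using cl_ge[OF finV, of K G] subV by simp
      then show False using K by simp
    next
      assume "\<exists>I. is_indep G I \<and> card I = 3"
      then obtain I where I: "is_indep G I" "card I = 3" by auto
      have "I \<subseteq> V G" "ind G I" using I unfolding is_indep_def ind_def by auto
      then have "card I \<le> 2" by (rule alpha2)
      then show False using I(2) by simp
    qed
  qed
qed

lemma final: "int n = 4 * (int ch - int om) - 2 * x - 1 \<and>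
   4 * (int ch - int om) - 2 * x - 1 < int (ramsey3 ((int ch - int om) - x + 1))"
proof -
  have e1: "int n = int ch + 2 * (int ch - int om) - x - 1" using nlow main_ineq by linarith
  have e2: "int n = 2 * int ch - 1" using nfinal .
  have a: "(int ch - int om) - x + 1 = int om + 1" using e1 e2 by algebra
  have r: "ramsey3 ((int ch - int om) - x + 1) = ramsey3 (int om + 1)" using a by (rule arg_cong)
  have "int n = 4 * (int ch - int om) - 2 * x - 1" using e1 e2 by linarith
  moreover have "int n < int (ramsey3 ((int ch - int om) - x + 1))" using ramsey_part r by simp
  ultimately show ?thesis by simp
qed

end

theorem theorem3p1:
  fixes x y :: int and G0 :: graph
  assumes "x \<ge> 0"
    and "M x y \<noteq> {}"
    and "minimal_in (M x y) G0"
    and "\<not> separable G0"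
  shows "int (card (V G0)) = 4 * f G0 - 2 * x - 1 \<and>
         4 * f G0 - 2 * x - 1 < int (ramsey3 (f G0 - x + 1))"
proof -
  have inM: "G0 \<in> M x y" and mn: "card (V G0) = (LEAST n. \<exists>G\<in>M x y. card (V G) = n)"
    using assms(3) unfolding minimal_in_def by auto
  have g: "is_graph G0" using inM unfolding M_def by simp
  have minl: "\<not> (int (card W) < int (chi (sub G0 W)) + 2 * (int (chi (sub G0 W)) - int (cl (sub G0 W))) - x
                     \<and> int (chi (sub G0 W)) - int (cl (sub G0 W)) \<le> y)" if W: "W \<subset> V G0" for W
  proof
    assume a: "int (card W) < int (chi (sub G0 W)) + 2 * (int (chi (sub G0 W)) - int (cl (sub G0 W))) - x
                     \<and> int (chi (sub G0 W)) - int (cl (sub G0 W)) \<le> y"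
    have "sub G0 W \<in> M x y" unfolding M_def f_def using a is_graph_sub[OF g] W by auto
    then have "\<exists>G\<in>M x y. card (V G) = card W" by (intro bexI[of _ "sub G0 W"]) auto
    then have "(LEAST n. \<exists>G\<in>M x y. card (V G) = n) \<le> card W" by (rule Least_le)
    then have "card (V G0) \<le> card W" using mn by simp
    moreover have "card W < card (V G0)" using psubset_card_mono[OF _ W] g unfolding is_graph_def by blast
    ultimately show False by simp
  qed
  interpret mctx G0 x y
    by (unfold_locales) (use assms(1) g inM minl assms(4) in auto)
  show ?thesis using final unfolding f_def .
qed


end
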